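(* Assume $0<\alpha<\sqrt n$ and $e\in\mathbb{R}^n$ satisfies $\|e\|=\sqrt n$. Let $L$ be a linear subspace, and let $\bar x\ne0$ be a point of $M:=(e+L)\cap\partial K_e(\alpha)$. Let $T_{\bar x}$ denote the tangent space to $M$ at $\bar x$, and let $\theta$ be the angle between $\bar x$ and its orthogonal projection onto $T_{\bar x}$. Then the orthogonal projection $P_{L^\perp}(e)$ of $e$ onto $L^\perp$ satisfies \[ \|P_{L^\perp}(e)\|^2=\frac{(n-\alpha^2)\|\bar x\|^2\sin^2\theta}{n-\alpha^2+(\|\bar x\|-\alpha)^2\sin^2\theta}. \]
   Context: $\mathbb{R}^n$ carries the dot product and Euclidean norm. $K_e(\alpha)=\{x:e^Tx\ge\alpha\|x\|\}$, $\partial$ denotes boundary, $e+L=\{e+v:v\in L\}$, $L^\perp$ is the orthogonal complement of $L$. The tangent space to $M$ at $\bar x$ is $T_{\bar x}=\{v\in L:(e^T\bar x)(e^Tv)-\alpha^2\bar x^Tv=0\}$. *)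

theory Defs
  imports "HOL-Analysis.Analysis"
begin

definition cone_K :: "'a::real_inner \<Rightarrow> real \<Rightarrow> 'a set" where
  "cone_K e \<alpha> = {x. e \<bullet> x \<ge> \<alpha> * norm x}"

definition orth_proj :: "'a::euclidean_space set \<Rightarrow> 'a \<Rightarrow> 'a" where
  "orth_proj S x = closest_point S x"

definition tangent_sp :: "'a::real_inner \<Rightarrow> real \<Rightarrow> 'a set \<Rightarrow> 'a \<Rightarrow> 'a set" where
  "tangent_sp e \<alpha> L xb = {v \<in> L. (e \<bullet> xb) * (e \<bullet> v) - \<alpha>\<^sup>2 * (xb \<bullet> v) = 0}"

definition vec_angle :: "'a::real_inner \<Rightarrow> 'a \<Rightarrow> real" where
  "vec_angle u v = (if u = 0 \<or> v = 0 then pi / 2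
                    else arccos ((u \<bullet> v) / (norm u * norm v)))"

end

theory Submission
  imports Defs
begin

lemma proj_char:
  fixes S :: "'a::euclidean_space set"
  assumes "subspace S" "y \<in> S" "\<And>z. z \<in> S \<Longrightarrow> (x - y) \<bullet> z = 0"
  shows "orth_proj S x = y"
proof -
  have "y = closest_point S x"
  proof (rule closest_point_unique)
    show "convex S" using assms(1) by (rule subspace_imp_convex)
    show "closed S" using assms(1) by (rule closed_subspace)
    show "y \<in> S" by fact
    show "\<forall>z\<in>S. dist x y \<le> dist x z"
    proof
      fix z assume z: "z \<in> S"
      have "y - z \<in> S" using assms(1,2) z by (simp add: subspace_diff)
      hence o: "(x - y) \<bullet> (y - z) = 0" using assms(3) by blast
      have "(dist x z)\<^sup>2 = (norm ((x - y) + (y - z)))\<^sup>2" by (simp add: dist_norm)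
      also have "\<dots> = (norm (x-y))\<^sup>2 + (norm (y-z))\<^sup>2"
        unfolding power2_norm_eq_inner inner_add_left inner_add_right using o by (simp add: inner_commute)
      also have "\<dots> = (dist x y)\<^sup>2 + (norm (y-z))\<^sup>2" by (simp only: dist_norm)
      finally have eq: "(dist x z)\<^sup>2 = (dist x y)\<^sup>2 + (norm (y-z))\<^sup>2" .
      have "(dist x y)\<^sup>2 \<le> (dist x z)\<^sup>2" using eq zero_le_power2[of "norm (y-z)"] by linarith
      thus "dist x y \<le> dist x z" using power2_le_imp_le zero_le_dist by blast
    qed
  qed
  thus ?thesis by (simp add: orth_proj_def)
qed

lemma final_alg:
  fixes s r N c DD S :: real
  assumes "N > 0" "r > 0" "DD > 0" "DD = r^2 * N - c * s" "r^2 * S = s + s^2 * c / DD" "c \<ge> 0" "S \<ge> 0"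
  shows "s = (N * r^2 * S) / (N + c * S)"
proof -
  have pos: "N + c * S > 0" using assms by (simp add: add_pos_nonneg)
  have e1: "DD * (r^2 * S) = DD * s + s^2 * c"
    using assms(3) unfolding assms(5) by (simp add: distrib_left)
  have h: "(r^2 * S) * (r^2 * N - c * s) = r^2 * N * s"
    using e1 unfolding assms(4) by algebra
  have "r^2 * (s * (N + c * S)) = r^2 * (N * r^2 * S)"
    using h by algebra
  hence "s * (N + c * S) = N * r^2 * S" using assms(2) by simp
  thus ?thesis using pos by (simp add: eq_divide_eq)
qed


theorem lemma5p3:
  fixes e xb :: "real ^ 'n" and \<alpha> :: real and L :: "(real ^ 'n) set"
  assumes "0 < \<alpha>" and "\<alpha> < sqrt (real CARD('n))"
    and "norm e = sqrt (real CARD('n))"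
    and "subspace L"
    and "xb \<in> ((\<lambda>v. e + v) ` L) \<inter> frontier (cone_K e \<alpha>)"
    and "xb \<noteq> 0"
  shows "(norm (orth_proj (orthogonal_comp L) e))\<^sup>2 =
    ((real CARD('n) - \<alpha>\<^sup>2) * (norm xb)\<^sup>2
        * (sin (vec_angle xb (orth_proj (tangent_sp e \<alpha> L xb) xb)))\<^sup>2)
    / (real CARD('n) - \<alpha>\<^sup>2
        + (norm xb - \<alpha>)\<^sup>2 * (sin (vec_angle xb (orth_proj (tangent_sp e \<alpha> L xb) xb)))\<^sup>2)"
proof -
  define n where "n = real CARD('n)"
  define N where "N = n - \<alpha>\<^sup>2"
  define r where "r = norm xb"
  have npos: "n \<ge> 0" unfolding n_def by simp
  have "\<alpha>\<^sup>2 < (sqrt n)\<^sup>2" using assms(1,2) unfolding n_def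
    by (intro power_strict_mono) auto
  hence Npos: "N > 0" using npos unfolding N_def by simp
  have ee: "e \<bullet> e = n" using assms(3) npos unfolding n_def
    by (metis power2_norm_eq_inner real_sqrt_pow2 of_nat_0_le_iff)
  obtain l where l: "l \<in> L" "xb = e + l" using assms(5) by auto
  have rpos: "r > 0" using assms(6) unfolding r_def by simp
  have exb: "e \<bullet> xb = \<alpha> * r"
  proof -
    have cl: "closed (cone_K e \<alpha>)" unfolding cone_K_def
      by (intro closed_Collect_le continuous_intros)
    have op: "open {x. \<alpha> * norm x < e \<bullet> x}"
      by (intro open_Collect_less continuous_intros)
    have sub: "{x. \<alpha> * norm x < e \<bullet> x} \<subseteq> cone_K e \<alpha>" unfolding cone_K_def by auto
    have fr: "xb \<in> frontier (cone_K e \<alpha>)" using assms(5) by auto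
    hence "xb \<in> cone_K e \<alpha>" using cl by (simp add: frontier_def closure_closed)
    hence g: "e \<bullet> xb \<ge> \<alpha> * r" unfolding cone_K_def r_def by simp
    have "xb \<notin> interior (cone_K e \<alpha>)" using fr by (simp add: frontier_def)
    hence "xb \<notin> {x. \<alpha> * norm x < e \<bullet> x}" using interior_maximal[OF sub op] by blast
    thus ?thesis using g unfolding r_def by simp
  qed
  obtain q p where qp: "q \<in> L" "p \<in> orthogonal_comp L" "e = q + p"
    using subspace_sum_orthogonal_comp[OF assms(4)] set_plus_elim
    by (metis UNIV_I)
  have pz: "p \<bullet> z = 0" if "z \<in> L" for z
    using qp(2) that unfolding orthogonal_comp_def orthogonal_def by (auto simp: inner_commute)
  have Pe: "orth_proj (orthogonal_comp L) e = p"
  proof (rule proj_char[OF subspace_orthogonal_comp qp(2)])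
    fix z assume "z \<in> orthogonal_comp L"
    thus "(e - p) \<bullet> z = 0" using qp(1,3) unfolding orthogonal_comp_def orthogonal_def by auto
  qed
  define m where "m = q + l"
  have mL: "m \<in> L" unfolding m_def using qp(1) l(1) assms(4) by (simp add: subspace_add)
  have xbm: "xb = m + p" unfolding m_def using l(2) qp(3) by (simp add: algebra_simps)
  define s where "s = p \<bullet> p"
  have pm: "p \<bullet> m = 0" "m \<bullet> p = 0" using pz[OF mL] by (auto simp: inner_commute)
  have pq: "p \<bullet> q = 0" "q \<bullet> p = 0" using pz[OF qp(1)] by (auto simp: inner_commute)
  have mm: "m \<bullet> m = r\<^sup>2 - s"
  proof -
    have "r\<^sup>2 = xb \<bullet> xb" unfolding r_def by (simp add: power2_norm_eq_inner)
    also have "\<dots> = m \<bullet> m + s" unfolding xbm s_def using pm by (simp add: inner_add_left inner_add_right)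
    finally show ?thesis by simp
  qed
  have qm: "q \<bullet> m = \<alpha> * r - s"
  proof -
    have "e \<bullet> xb = q \<bullet> m + s" unfolding xbm qp(3) s_def using pm pq by (simp add: inner_add_left inner_add_right)
    thus ?thesis using exb by simp
  qed
  have qq: "q \<bullet> q = n - s"
  proof -
    have "e \<bullet> e = q \<bullet> q + s" unfolding qp(3) s_def using pq by (simp add: inner_add_left inner_add_right)
    thus ?thesis using ee by simp
  qed
  have mq: "m \<bullet> q = \<alpha> * r - s" using qm by (simp add: inner_commute)
  define u where "u = r *\<^sub>R q - \<alpha> *\<^sub>R m"
  have uL: "u \<in> L" unfolding u_def using qp(1) mL assms(4)
    by (simp add: subspace_diff subspace_scale)
  have pu: "p \<bullet> u = 0" "u \<bullet> p = 0" using pz[OF uL] by (auto simp: inner_commute)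
  define DD where "DD = u \<bullet> u"
  have uu: "u \<bullet> u = r * r * (q \<bullet> q) - r * \<alpha> * (q \<bullet> m) - \<alpha> * r * (m \<bullet> q) + \<alpha> * \<alpha> * (m \<bullet> m)"
    unfolding u_def by (simp add: inner_diff_left inner_diff_right algebra_simps)
  have DDv: "DD = r\<^sup>2 * N - (r - \<alpha>)\<^sup>2 * s"
    unfolding DD_def uu qq qm mq mm N_def by (simp add: algebra_simps power2_eq_square)
  define k where "k = m \<bullet> u"
  have mu: "m \<bullet> u = r * (m \<bullet> q) - \<alpha> * (m \<bullet> m)"
    unfolding u_def by (simp add: inner_diff_right)
  have kv: "k = - ((r - \<alpha>) * s)"
    unfolding k_def mu mq mm by (simp add: algebra_simps power2_eq_square)
  have uq0: "u \<bullet> q = r * (q \<bullet> q) - \<alpha> * (m \<bullet> q)"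
    unfolding u_def by (simp add: inner_diff_left)
  have uq: "u \<bullet> q = r * (n - s) - \<alpha> * (\<alpha> * r - s)"
    unfolding uq0 qq mq by simp
  have un0: "u \<noteq> 0"
  proof
    assume "u = 0"
    hence "u \<bullet> q = 0" "k = 0" unfolding k_def by auto
    hence "r * (n - s) - \<alpha> * (\<alpha> * r - s) = 0" "(r - \<alpha>) * s = 0" using uq kv by auto
    moreover have "r * N = (r * (n - s) - \<alpha> * (\<alpha> * r - s)) + (r - \<alpha>) * s"
      unfolding N_def by (simp add: algebra_simps power2_eq_square)
    ultimately have "r * N = 0" by simp
    thus False using rpos Npos by simp
  qed
  have DDpos: "DD > 0" unfolding DD_def using un0 by simp
  define T where "T = tangent_sp e \<alpha> L xb"
  have Tchar: "v \<in> T \<longleftrightarrow> v \<in> L \<and> u \<bullet> v = 0" for v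
  proof -
    have "v \<in> L \<Longrightarrow> (e \<bullet> xb) * (e \<bullet> v) - \<alpha>\<^sup>2 * (xb \<bullet> v) = \<alpha> * (u \<bullet> v)"
    proof -
      assume vL: "v \<in> L"
      have ev: "e \<bullet> v = q \<bullet> v" using qp(3) pz[OF vL] by (simp add: inner_add_left)
      have xv: "xb \<bullet> v = m \<bullet> v" using xbm pz[OF vL] by (simp add: inner_add_left)
      have uv: "u \<bullet> v = r * (q \<bullet> v) - \<alpha> * (m \<bullet> v)" unfolding u_def by (simp add: inner_diff_left)
      show ?thesis unfolding exb ev xv uv by (simp add: algebra_simps power2_eq_square)
    qed
    thus ?thesis unfolding T_def tangent_sp_def using assms(1) by auto
  qed
  have subT: "subspace T"
  proof -
    have "T = {v. v \<in> L \<and> u \<bullet> v = 0}" using Tchar by auto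
    thus ?thesis unfolding subspace_def using assms(4)
      by (auto simp: subspace_0 subspace_add subspace_scale inner_add_right)
  qed
  define y where "y = m - (k / DD) *\<^sub>R u"
  have yT: "y \<in> T" unfolding Tchar y_def
    using mL uL assms(4) DDpos by (auto simp: subspace_diff subspace_scale inner_diff_right k_def DD_def inner_commute)
  have xy: "xb - y = p + (k / DD) *\<^sub>R u" unfolding y_def xbm by simp
  have zT: "(xb - y) \<bullet> z = 0" if "z \<in> T" for z
  proof -
    have "z \<in> L" "u \<bullet> z = 0" using Tchar that by auto
    thus "(xb - y) \<bullet> z = 0" unfolding xy using pz by (simp add: inner_add_left)
  qed
  have Py: "orth_proj T xb = y" by (rule proj_char[OF subT yT zT])
  have xyy: "(xb - y) \<bullet> y = 0" using zT[OF yT] .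
  have nxy: "(xb - y) \<bullet> (xb - y) = s + k\<^sup>2 / DD"
    unfolding xy s_def using pu DDpos
    by (simp add: inner_add_left inner_add_right DD_def power2_eq_square)
  have rr: "r\<^sup>2 = (xb - y) \<bullet> (xb - y) + y \<bullet> y"
  proof -
    have "r\<^sup>2 = ((xb - y) + y) \<bullet> ((xb - y) + y)" unfolding r_def by (simp add: power2_norm_eq_inner)
    also have "\<dots> = (xb - y) \<bullet> (xb - y) + y \<bullet> y"
      unfolding inner_add_left inner_add_right using xyy by (simp add: inner_commute)
    finally show ?thesis .
  qed
  define S where "S = (sin (vec_angle xb y))\<^sup>2"
  have rS: "r\<^sup>2 * S = r\<^sup>2 - y \<bullet> y"
  proof (cases "y = 0")
    case True
    thus ?thesis unfolding S_def vec_angle_def by simp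
  next
    case False
    have xby: "xb \<bullet> y = y \<bullet> y" using xyy by (simp add: inner_diff_left)
    have ny: "norm y > 0" using False by simp
    have a: "(xb \<bullet> y) / (norm xb * norm y) = norm y / r"
      unfolding xby r_def using ny by (simp add: power2_norm_eq_inner[symmetric] power2_eq_square)
    have yle: "y \<bullet> y \<le> r\<^sup>2" using rr inner_ge_zero[of "xb - y"] by linarith
    hence "(norm y)\<^sup>2 \<le> r\<^sup>2" by (simp add: power2_norm_eq_inner)
    hence "norm y \<le> r" using rpos power2_le_imp_le by (metis less_imp_le)
    hence a1: "norm y / r \<le> 1" using rpos by simp
    have a0: "norm y / r \<ge> 0" using rpos by simp
    hence ab: "\<bar>norm y / r\<bar> \<le> 1" using a1 by simp
    have vy: "vec_angle xb y = arccos (norm y / r)" unfolding vec_angle_def using False assms(6) a by simp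
    have sq: "(norm y / r)\<^sup>2 \<le> 1" using a0 a1 by (rule power_le_one)
    have "S = (sqrt (1 - (norm y / r)\<^sup>2))\<^sup>2" unfolding S_def vy sin_arccos_abs[OF ab] ..
    hence "S = 1 - (norm y / r)\<^sup>2" using sq by simp
    thus ?thesis using rpos by (simp add: field_simps power2_norm_eq_inner)
  qed
  have k2: "k\<^sup>2 = s\<^sup>2 * (r - \<alpha>)\<^sup>2" unfolding kv by (simp add: power_mult_distrib mult.commute)
  have rS2: "r\<^sup>2 * S = s + s\<^sup>2 * (r - \<alpha>)\<^sup>2 / DD"
    using rS rr nxy unfolding k2 by linarith
  have Sge: "S \<ge> 0" unfolding S_def by simp
  have fin: "s = (N * r\<^sup>2 * S) / (N + (r - \<alpha>)\<^sup>2 * S)"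
    by (rule final_alg[OF Npos rpos DDpos DDv rS2 _ Sge]) simp
  have ns: "(norm (orth_proj (orthogonal_comp L) e))\<^sup>2 = s" unfolding Pe s_def by (simp add: power2_norm_eq_inner)
  have Sdef: "S = (sin (vec_angle xb (orth_proj (tangent_sp e \<alpha> L xb) xb)))\<^sup>2"
    unfolding S_def T_def[symmetric] Py ..
  show ?thesis unfolding Sdef[symmetric] r_def[symmetric] n_def[symmetric] N_def[symmetric] ns
    by (rule fin)
qed

end
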